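(* Let $F_0=\begin{pmatrix}1&1&1\\1&1&0\\1&0&1\end{pmatrix}$. Then $\|F_0\|_{\mathrm{Schur}}\ge\frac{\sqrt{26}}{4}>\frac{1+\sqrt{2}}{2}$. Consequently, if $I$ is any index set and $A=(A(s,t))_{s,t\in I}$ is a matrix for which there exist distinct $s_1,s_2,s_3\in I$ and distinct $t_1,t_2,t_3\in I$ with $(A(s_i,t_j))_{i,j=1}^3=F_0$, then $\|A\|_{\mathrm{Schur}}>\frac{1+\sqrt{2}}{2}$.
   Context: For an index set $I$, let $\mathcal{K}_0$ be the space of matrices indexed by $I\times I$ with only finitely many nonzero entries, viewed as operators on $\ell^2(I)$. The Schur product of matrices $A,X$ indexed by $I\times I$ is $(A\bullet X)(s,t)=A(s,t)X(s,t)$. The Schur multiplier norm of $A$ is $\|A\|_{\mathrm{Schur}}=\sup\{\|A\bullet X\|_{\mathcal{B}(\ell^2(I))}/\|X\|_{\mathcal{B}(\ell^2(I))}: 0\ne X\in\mathcal{K}_0\}$. *)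

theory Defs
  imports "HOL-Analysis.Analysis"
begin

text \<open>Matrices indexed by I x I are functions 'i => 'i => complex; only entries in I x I matter.
  Finitely supported vectors in l2(I) and finitely supported matrices (the space K_0).\<close>

definition fsupp_vec :: "'i set \<Rightarrow> ('i \<Rightarrow> complex) \<Rightarrow> bool" where
  "fsupp_vec I x \<longleftrightarrow> finite {t. x t \<noteq> 0} \<and> {t. x t \<noteq> 0} \<subseteq> I"

definition fsupp_mat :: "'i set \<Rightarrow> ('i \<Rightarrow> 'i \<Rightarrow> complex) \<Rightarrow> bool" where
  "fsupp_mat I X \<longleftrightarrow> finite {(s,t). X s t \<noteq> 0} \<and> {(s,t). X s t \<noteq> 0} \<subseteq> I \<times> I"

definition l2norm :: "('i \<Rightarrow> complex) \<Rightarrow> real" where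
  "l2norm v = sqrt (\<Sum>s\<in>{s. v s \<noteq> 0}. (cmod (v s))\<^sup>2)"

definition matvec :: "('i \<Rightarrow> 'i \<Rightarrow> complex) \<Rightarrow> ('i \<Rightarrow> complex) \<Rightarrow> ('i \<Rightarrow> complex)" where
  "matvec X x = (\<lambda>s. \<Sum>t\<in>{t. x t \<noteq> 0}. X s t * x t)"

text \<open>Operator norm on l2(I) of a finitely supported matrix (computed over the dense
  subspace of finitely supported vectors).\<close>
definition op_norm_on :: "'i set \<Rightarrow> ('i \<Rightarrow> 'i \<Rightarrow> complex) \<Rightarrow> real" where
  "op_norm_on I X = Sup {l2norm (matvec X x) | x. fsupp_vec I x \<and> l2norm x \<le> 1}"

definition schur_prod :: "('i \<Rightarrow> 'i \<Rightarrow> complex) \<Rightarrow> ('i \<Rightarrow> 'i \<Rightarrow> complex) \<Rightarrow> ('i \<Rightarrow> 'i \<Rightarrow> complex)" where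
  "schur_prod A X = (\<lambda>s t. A s t * X s t)"

definition schur_norm :: "'i set \<Rightarrow> ('i \<Rightarrow> 'i \<Rightarrow> complex) \<Rightarrow> ereal" where
  "schur_norm I A = Sup {ereal (op_norm_on I (schur_prod A X) / op_norm_on I X) | X.
      fsupp_mat I X \<and> X \<noteq> (\<lambda>_ _. 0)}"

definition F0 :: "nat \<Rightarrow> nat \<Rightarrow> complex" where
  "F0 i j = (if i < 3 \<and> j < 3 then (if (i = 1 \<and> j = 2) \<or> (i = 2 \<and> j = 1) then 0 else 1) else 0)"

end

theory Submission
  imports Defs
begin

lemma sum3: "(\<Sum>i<3::nat. f i) = f 0 + f 1 + (f 2 :: 'a::comm_monoid_add)"
  by (simp add: eval_nat_numeral)

definition blk :: "(nat \<Rightarrow> 'i) \<Rightarrow> (nat \<Rightarrow> 'i) \<Rightarrow> (nat \<Rightarrow> nat \<Rightarrow> complex) \<Rightarrow> 'i \<Rightarrow> 'i \<Rightarrow> complex" where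
  "blk s t c = (\<lambda>a b. \<Sum>i<3. \<Sum>j<3. if a = s i \<and> b = t j then c i j else 0)"

lemma l2norm_eq:
  assumes "finite F" "{a. v a \<noteq> 0} \<subseteq> F"
  shows "l2norm v = sqrt (\<Sum>a\<in>F. (cmod (v a))^2)"
  unfolding l2norm_def
  by (rule arg_cong[where f=sqrt], rule sum.mono_neutral_left) (use assms in auto)

lemma l2norm_nonneg: "0 \<le> l2norm v"
  by (simp add: l2norm_def sum_nonneg)

lemma matvec_blk:
  assumes "finite {b. x b \<noteq> 0}"
  shows "matvec (blk s t c) x = (\<lambda>a. \<Sum>i<3. if a = s i then (\<Sum>j<3. c i j * x (t j)) else 0)"
proof
  fix a
  let ?S = "{b. x b \<noteq> 0}"
  have "matvec (blk s t c) x a = (\<Sum>b\<in>?S. \<Sum>i<3. \<Sum>j<3. (if a = s i \<and> b = t j then c i j * x b else 0))"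
    unfolding matvec_def blk_def sum_distrib_right by (intro sum.cong refl) auto
  also have "\<dots> = (\<Sum>i<3. \<Sum>b\<in>?S. \<Sum>j<3. (if a = s i \<and> b = t j then c i j * x b else 0))"
    by (rule sum.swap)
  also have "\<dots> = (\<Sum>i<3. \<Sum>j<3. \<Sum>b\<in>?S. (if a = s i \<and> b = t j then c i j * x b else 0))"
    by (rule sum.cong[OF refl], rule sum.swap)
  also have "\<dots> = (\<Sum>i<3. \<Sum>j<3. if a = s i then c i j * x (t j) else 0)"
  proof (intro sum.cong refl)
    fix i j
    show "(\<Sum>b\<in>?S. (if a = s i \<and> b = t j then c i j * x b else 0)) = (if a = s i then c i j * x (t j) else 0)"
    proof (cases "a = s i")
      case True
      then have "(\<Sum>b\<in>?S. (if a = s i \<and> b = t j then c i j * x b else 0)) = (\<Sum>b\<in>?S. (if b = t j then c i j * x b else 0))"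
        by simp
      also have "\<dots> = (if t j \<in> ?S then c i j * x (t j) else 0)"
        using assms by (simp add: sum.delta')
      finally show ?thesis using True by auto
    qed simp
  qed
  also have "\<dots> = (\<Sum>i<3. if a = s i then (\<Sum>j<3. c i j * x (t j)) else 0)"
    by (intro sum.cong refl) auto
  finally show "matvec (blk s t c) x a = (\<Sum>i<3. if a = s i then (\<Sum>j<3. c i j * x (t j)) else 0)" .
qed

lemma vec3_at:
  fixes s :: "nat \<Rightarrow> 'i" and k :: nat
  assumes "inj_on s {..<3}" "k < 3"
  shows "(\<Sum>i<3. if s k = s i then y i else 0) = y k"
proof -
  have "(\<Sum>i<3. if s k = s i then y i else 0) = (\<Sum>i<3. if i = k then y i else 0)"
    using assms by (intro sum.cong refl) (auto dest: inj_onD)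
  also have "\<dots> = y k" using assms by (simp add: sum.delta')
  finally show ?thesis .
qed

lemma vec3_supp: fixes s :: "nat \<Rightarrow> 'i" shows "{a. (\<Sum>i<3. if a = s i then y i else 0) \<noteq> 0} \<subseteq> s ` {..<3}"
proof
  fix a assume "a \<in> {a. (\<Sum>i<3. if a = s i then y i else 0) \<noteq> 0}"
  then obtain i where "i < 3" "(if a = s i then y i else 0) \<noteq> 0"
    by (auto elim: sum.not_neutral_contains_not_neutral)
  then show "a \<in> s ` {..<3}" by (auto split: if_splits)
qed

lemma l2_vec3:
  fixes s :: "nat \<Rightarrow> 'i"
  assumes "inj_on s {..<3}"
  shows "l2norm (\<lambda>a. \<Sum>i<3. if a = s i then y i else 0) = sqrt (\<Sum>i<3. (cmod (y i))^2)"
proof -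
  have "l2norm (\<lambda>a. \<Sum>i<3. if a = s i then y i else 0)
     = sqrt (\<Sum>a\<in>s ` {..<3}. (cmod (\<Sum>i<3. if a = s i then y i else 0))^2)"
    by (rule l2norm_eq[OF _ vec3_supp]) simp
  also have "\<dots> = sqrt (\<Sum>k<3. (cmod (\<Sum>i<3. if s k = s i then y i else 0))^2)"
    using assms by (simp add: sum.reindex)
  also have "\<dots> = sqrt (\<Sum>k<3. (cmod (y k))^2)"
    using assms by (simp add: vec3_at)
  finally show ?thesis .
qed

lemma l2_lower:
  fixes t :: "nat \<Rightarrow> 'i"
  assumes "finite {a. x a \<noteq> 0}" "inj_on t {..<3}"
  shows "(\<Sum>j<3. (cmod (x (t j)))^2) \<le> (l2norm x)^2"
proof -
  let ?F = "{a. x a \<noteq> 0} \<union> t ` {..<3}"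
  have "l2norm x = sqrt (\<Sum>a\<in>?F. (cmod (x a))^2)"
    by (rule l2norm_eq) (use assms in auto)
  then have "(l2norm x)^2 = (\<Sum>a\<in>?F. (cmod (x a))^2)"
    by (simp add: sum_nonneg)
  moreover have "(\<Sum>a\<in>t ` {..<3}. (cmod (x a))^2) \<le> (\<Sum>a\<in>?F. (cmod (x a))^2)"
    by (rule sum_mono2) (use assms in auto)
  moreover have "(\<Sum>a\<in>t ` {..<3}. (cmod (x a))^2) = (\<Sum>j<3. (cmod (x (t j)))^2)"
    using assms by (simp add: sum.reindex)
  ultimately show ?thesis by linarith
qed

lemma blk_supp:
  fixes s t :: "nat \<Rightarrow> 'i"
  assumes "blk s t c a b \<noteq> 0"
  shows "a \<in> s ` {..<3} \<and> b \<in> t ` {..<3}"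
proof -
  from assms obtain i where "i < 3" "(\<Sum>j<3. if a = s i \<and> b = t j then c i j else 0) \<noteq> 0"
    unfolding blk_def by (auto elim: sum.not_neutral_contains_not_neutral)
  then obtain j where "j < 3" "(if a = s i \<and> b = t j then c i j else 0) \<noteq> 0"
    by (auto elim: sum.not_neutral_contains_not_neutral)
  with \<open>i < 3\<close> show ?thesis by (auto split: if_splits)
qed

lemma blk_at:
  fixes s t :: "nat \<Rightarrow> 'i"
  assumes "inj_on s {..<3}" "inj_on t {..<3}" "k < 3" "l < 3"
  shows "blk s t c (s k) (t l) = c k l"
proof -
  have "blk s t c (s k) (t l) = (\<Sum>i<3. \<Sum>j<3. if i = k \<and> j = l then c i j else 0)"
    unfolding blk_def using assms by (intro sum.cong refl) (auto dest: inj_onD)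
  also have "\<dots> = (\<Sum>i<3. if i = k then c i l else 0)"
    using assms by (intro sum.cong refl) (auto simp: sum.delta')
  also have "\<dots> = c k l" using assms by (simp add: sum.delta')
  finally show ?thesis .
qed

lemma fsupp_blk:
  fixes s t :: "nat \<Rightarrow> 'i"
  assumes "s ` {..<3} \<subseteq> I" "t ` {..<3} \<subseteq> I"
  shows "fsupp_mat I (blk s t c)"
proof -
  have sub: "{(a,b). blk s t c a b \<noteq> 0} \<subseteq> s ` {..<3} \<times> t ` {..<3}"
    by (auto dest!: blk_supp)
  then have "finite {(a,b). blk s t c a b \<noteq> 0}" by (rule finite_subset) auto
  with sub assms show ?thesis unfolding fsupp_mat_def by blast
qed

lemma schur_blk:
  "schur_prod A (blk s t c) = blk s t (\<lambda>i j. A (s i) (t j) * c i j)"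
  unfolding schur_prod_def blk_def
  by (intro ext) (auto simp: sum_distrib_left intro!: sum.cong)

lemma l2_matvec_blk:
  fixes s t :: "nat \<Rightarrow> 'i"
  assumes "inj_on s {..<3}" "finite {b. x b \<noteq> 0}"
  shows "l2norm (matvec (blk s t c) x) = sqrt (\<Sum>i<3. (cmod (\<Sum>j<3. c i j * x (t j)))^2)"
  using assms by (simp add: matvec_blk l2_vec3)

lemma op_blk_ub:
  fixes s t :: "nat \<Rightarrow> 'i"
  assumes "inj_on s {..<3}" "inj_on t {..<3}" "\<forall>i<3. \<forall>j<3. cmod (c i j) \<le> 1"
    "fsupp_vec I x" "l2norm x \<le> 1"
  shows "l2norm (matvec (blk s t c) x) \<le> 6"
proof -
  have fin: "finite {b. x b \<noteq> 0}" using assms(4) unfolding fsupp_vec_def by auto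
  have "(\<Sum>j<3. (cmod (x (t j)))^2) \<le> (l2norm x)^2" by (rule l2_lower[OF fin assms(2)])
  also have "\<dots> \<le> 1" by (rule power_le_one[OF l2norm_nonneg assms(5)])
  finally have S: "(\<Sum>j<3. (cmod (x (t j)))^2) \<le> 1" .
  have xj: "cmod (x (t j)) \<le> 1" if "j < 3" for j
  proof -
    have "(cmod (x (t j)))^2 \<le> (\<Sum>j<3. (cmod (x (t j)))^2)"
      using that by (intro member_le_sum) auto
    with S have "(cmod (x (t j)))^2 \<le> 1^2" by simp
    then show ?thesis by (rule power2_le_imp_le) simp
  qed
  have yi: "(cmod (\<Sum>j<3. c i j * x (t j)))^2 \<le> 9" if "i < 3" for i
  proof -
    have "cmod (\<Sum>j<3. c i j * x (t j)) \<le> (\<Sum>j<3. cmod (c i j * x (t j)))"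
      by (rule norm_sum)
    also have "\<dots> \<le> (\<Sum>j<3::nat. 1)"
    proof (intro sum_mono)
      fix j assume "j \<in> {..<3::nat}"
      then show "cmod (c i j * x (t j)) \<le> 1"
        using assms(3) that xj by (simp add: norm_mult mult_le_one)
    qed
    finally have "cmod (\<Sum>j<3. c i j * x (t j)) \<le> 3" by simp
    then have "(cmod (\<Sum>j<3. c i j * x (t j)))^2 \<le> 3^2"
      by (intro power_mono) auto
    then show ?thesis by simp
  qed
  have "(\<Sum>i<3. (cmod (\<Sum>j<3. c i j * x (t j)))^2) \<le> (\<Sum>i<3::nat. 9)"
    using yi by (intro sum_mono) auto
  then have "(\<Sum>i<3. (cmod (\<Sum>j<3. c i j * x (t j)))^2) \<le> 6^2" by simp
  then have "sqrt (\<Sum>i<3. (cmod (\<Sum>j<3. c i j * x (t j)))^2) \<le> 6"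
    using real_sqrt_le_mono by fastforce
  then show ?thesis using l2_matvec_blk[OF assms(1) fin] by simp
qed

lemma op_blk_bdd:
  fixes s t :: "nat \<Rightarrow> 'i"
  assumes "inj_on s {..<3}" "inj_on t {..<3}" "\<forall>i<3. \<forall>j<3. cmod (c i j) \<le> 1"
  shows "bdd_above {l2norm (matvec (blk s t c) x) | x. fsupp_vec I x \<and> l2norm x \<le> 1}"
  using op_blk_ub[OF assms] unfolding bdd_above_def by blast

lemma op_blk_lb:
  fixes s t :: "nat \<Rightarrow> 'i"
  assumes "inj_on s {..<3}" "inj_on t {..<3}" "\<forall>i<3. \<forall>j<3. cmod (c i j) \<le> 1"
    "t ` {..<3} \<subseteq> I" "(\<Sum>j<3. (cmod (z j))^2) \<le> 1"
  shows "sqrt (\<Sum>i<3. (cmod (\<Sum>j<3. c i j * z j))^2) \<le> op_norm_on I (blk s t c)"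
proof -
  define x where "x = (\<lambda>a. \<Sum>j<3. if a = t j then z j else 0)"
  have supp: "{a. x a \<noteq> 0} \<subseteq> t ` {..<3}" unfolding x_def by (rule vec3_supp)
  then have fin: "finite {a. x a \<noteq> 0}" by (rule finite_subset) auto
  have fs: "fsupp_vec I x" unfolding fsupp_vec_def using fin supp assms(4) by blast
  have nx: "l2norm x = sqrt (\<Sum>j<3. (cmod (z j))^2)" unfolding x_def by (rule l2_vec3[OF assms(2)])
  have "l2norm x \<le> 1" using assms(5) nx by simp
  have xt: "x (t j) = z j" if "j < 3" for j unfolding x_def by (rule vec3_at[OF assms(2) that])
  have "l2norm (matvec (blk s t c) x) = sqrt (\<Sum>i<3. (cmod (\<Sum>j<3. c i j * z j))^2)"
    using l2_matvec_blk[OF assms(1) fin] xt by simp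
  moreover have "l2norm (matvec (blk s t c) x) \<le> op_norm_on I (blk s t c)"
    unfolding op_norm_on_def
    by (rule cSup_upper[OF _ op_blk_bdd[OF assms(1-3)]]) (use fs \<open>l2norm x \<le> 1\<close> in blast)
  ultimately show ?thesis by simp
qed

lemma op_blk_le1:
  fixes s t :: "nat \<Rightarrow> 'i"
  assumes "inj_on s {..<3}" "inj_on t {..<3}"
    "\<And>z. (\<Sum>i<3. (cmod (\<Sum>j<3. c i j * z j))^2) \<le> (\<Sum>j<3::nat. (cmod (z j))^2)"
  shows "op_norm_on I (blk s t c) \<le> 1"
  unfolding op_norm_on_def
proof (rule cSup_least)
  have "fsupp_vec I (\<lambda>_. 0)" "l2norm (\<lambda>_. 0 :: complex) \<le> 1"
    by (auto simp: fsupp_vec_def l2norm_def)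
  then show "{l2norm (matvec (blk s t c) x) | x. fsupp_vec I x \<and> l2norm x \<le> 1} \<noteq> {}" by blast
next
  fix r assume "r \<in> {l2norm (matvec (blk s t c) x) | x. fsupp_vec I x \<and> l2norm x \<le> 1}"
  then obtain x where x: "fsupp_vec I x" "l2norm x \<le> 1" and r: "r = l2norm (matvec (blk s t c) x)" by blast
  have fin: "finite {b. x b \<noteq> 0}" using x unfolding fsupp_vec_def by auto
  have "(\<Sum>i<3. (cmod (\<Sum>j<3. c i j * x (t j)))^2) \<le> (\<Sum>j<3. (cmod (x (t j)))^2)"
    by (rule assms(3))
  also have "\<dots> \<le> (l2norm x)^2" by (rule l2_lower[OF fin assms(2)])
  also have "\<dots> \<le> 1" by (rule power_le_one[OF l2norm_nonneg x(2)])
  finally show "r \<le> 1" using r l2_matvec_blk[OF assms(1) fin] by simp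
qed

definition cX :: "nat \<Rightarrow> nat \<Rightarrow> complex" where "cX i j = (if i = j then -1/3 else 2/3)"

lemma orth: "(\<Sum>i<3. (cmod (\<Sum>j<3. cX i j * z j))^2) \<le> (\<Sum>j<3::nat. (cmod (z j))^2)"
proof -
  have "(\<Sum>i<3. (cmod (\<Sum>j<3. cX i j * z j))^2) = (\<Sum>j<3::nat. (cmod (z j))^2)"
    apply (simp only: sum3 cmod_power2)
    apply (simp add: cX_def power2_eq_square algebra_simps)
    done
  then show ?thesis by simp
qed

lemma col: "(\<Sum>i<3. (cmod (\<Sum>j<3. cX i j * (if j = 0 then 1 else 0)))^2) = 1"
  by (simp add: sum3 cX_def cmod_power2 power2_eq_square)

lemma col2: "(\<Sum>j<3::nat. (cmod ((if j = 0 then 1 else 0)::complex))^2) \<le> 1"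
  by (simp add: sum3)

lemma lb: "26/16 \<le> (\<Sum>i<3. (cmod (\<Sum>j<3. (F0 i j * cX i j) * (if j = 0 then 41/59 else -30/59)))^2)"
  by (simp add: sum3 cX_def F0_def cmod_power2 power2_eq_square)

lemma lb2: "(\<Sum>j<3::nat. (cmod ((if j = 0 then 41/59 else -30/59)::complex))^2) \<le> 1"
  by (simp add: sum3 cmod_power2 power2_eq_square)

lemma ineq: "(1 + sqrt 2) / 2 < sqrt 26 / 4"
proof -
  have "sqrt 2 < 1.42" by (rule real_less_lsqrt) (auto simp: power2_eq_square)
  moreover have "5.09 < sqrt 26" by (rule real_less_rsqrt) (auto simp: power2_eq_square)
  ultimately show ?thesis by simp
qed

lemma key:
  fixes s t :: "nat \<Rightarrow> 'i" and A :: "'i \<Rightarrow> 'i \<Rightarrow> complex"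
  assumes "inj_on s {..<3}" "inj_on t {..<3}" "s ` {..<3} \<subseteq> I" "t ` {..<3} \<subseteq> I"
    and F: "\<forall>i<3. \<forall>j<3. A (s i) (t j) = F0 i j"
  shows "ereal (sqrt 26 / 4) \<le> schur_norm I A"
proof -
  let ?X = "blk s t cX"
  let ?d = "\<lambda>i j. F0 i j * cX i j"
  have bc: "\<forall>i<3. \<forall>j<3. cmod (cX i j) \<le> 1" by (auto simp: cX_def)
  have bd: "\<forall>i<3. \<forall>j<3. cmod (?d i j) \<le> 1" by (auto simp: cX_def F0_def)
  have o1: "op_norm_on I ?X \<le> 1" by (rule op_blk_le1[OF assms(1,2) orth])
  have "sqrt (\<Sum>i<3. (cmod (\<Sum>j<3. cX i j * (if j = 0 then 1 else 0)))^2) \<le> op_norm_on I ?X"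
    by (rule op_blk_lb[OF assms(1,2) bc assms(4) col2])
  then have o2: "1 \<le> op_norm_on I ?X" by (simp add: col)
  have "blk s t (\<lambda>i j. A (s i) (t j) * cX i j) = blk s t ?d"
    unfolding blk_def using F by (intro ext sum.cong refl) auto
  then have sp: "schur_prod A ?X = blk s t ?d" by (simp add: schur_blk)
  have "sqrt (\<Sum>i<3. (cmod (\<Sum>j<3. ?d i j * (if j = 0 then 41/59 else -30/59)))^2) \<le> op_norm_on I (blk s t ?d)"
    by (rule op_blk_lb[OF assms(1,2) bd assms(4) lb2])
  moreover have "sqrt 26 / 4 \<le> sqrt (\<Sum>i<3. (cmod (\<Sum>j<3. ?d i j * (if j = 0 then 41/59 else -30/59)))^2)"
    by (rule real_le_rsqrt) (use lb in \<open>simp add: power_divide\<close>)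
  ultimately have o3: "sqrt 26 / 4 \<le> op_norm_on I (schur_prod A ?X)" using sp by simp
  have "op_norm_on I ?X = 1" using o1 o2 by simp
  then have r: "op_norm_on I (schur_prod A ?X) / op_norm_on I ?X \<ge> sqrt 26 / 4" using o3 by simp
  have nz: "?X \<noteq> (\<lambda>_ _. 0)"
  proof
    assume "?X = (\<lambda>_ _. 0)"
    then have "?X (s 0) (t 0) = 0" by simp
    moreover have "?X (s 0) (t 0) = cX 0 0" by (rule blk_at[OF assms(1,2)]) auto
    ultimately show False by (simp add: cX_def)
  qed
  have "ereal (op_norm_on I (schur_prod A ?X) / op_norm_on I ?X) \<le> schur_norm I A"
    unfolding schur_norm_def
    by (rule Sup_upper) (use fsupp_blk[OF assms(3,4)] nz in blast)
  then show ?thesis using r by (meson ereal_less_eq(3) order_trans)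
qed

theorem mainTheorem3:
  shows "schur_norm {0,1,2::nat} F0 \<ge> ereal (sqrt 26 / 4)
    \<and> sqrt 26 / 4 > (1 + sqrt 2) / 2
    \<and> (\<forall>(I :: 'i set) (A :: 'i \<Rightarrow> 'i \<Rightarrow> complex) s1 s2 s3 t1 t2 t3.
          s1 \<in> I \<and> s2 \<in> I \<and> s3 \<in> I \<and> t1 \<in> I \<and> t2 \<in> I \<and> t3 \<in> I
          \<and> distinct [s1, s2, s3] \<and> distinct [t1, t2, t3]
          \<and> (\<forall>i<3. \<forall>j<3. A ([s1, s2, s3] ! i) ([t1, t2, t3] ! j) = F0 i j)
          \<longrightarrow> schur_norm I A > ereal ((1 + sqrt 2) / 2))"
proof (intro conjI allI impI)
  show "schur_norm {0,1,2::nat} F0 \<ge> ereal (sqrt 26 / 4)"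
    by (rule key[where s=id and t=id]) (auto simp: lessThan_nat_numeral)
  show "sqrt 26 / 4 > (1 + sqrt 2) / 2" by (rule ineq)
next
  fix I :: "'i set" and A :: "'i \<Rightarrow> 'i \<Rightarrow> complex" and s1 s2 s3 t1 t2 t3
  assume h: "s1 \<in> I \<and> s2 \<in> I \<and> s3 \<in> I \<and> t1 \<in> I \<and> t2 \<in> I \<and> t3 \<in> I
          \<and> distinct [s1, s2, s3] \<and> distinct [t1, t2, t3]
          \<and> (\<forall>i<3. \<forall>j<3. A ([s1, s2, s3] ! i) ([t1, t2, t3] ! j) = F0 i j)"
  have "ereal (sqrt 26 / 4) \<le> schur_norm I A"
  proof (rule key[where s="(!) [s1, s2, s3]" and t="(!) [t1, t2, t3]"])
    show "inj_on ((!) [s1, s2, s3]) {..<3}" using h by (intro inj_on_nth) auto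
    show "inj_on ((!) [t1, t2, t3]) {..<3}" using h by (intro inj_on_nth) auto
    show "(!) [s1, s2, s3] ` {..<3} \<subseteq> I" using h by (auto simp: lessThan_nat_numeral)
    show "(!) [t1, t2, t3] ` {..<3} \<subseteq> I" using h by (auto simp: lessThan_nat_numeral)
  qed (use h in auto)
  moreover have "ereal ((1 + sqrt 2) / 2) < ereal (sqrt 26 / 4)" using ineq by simp
  ultimately show "schur_norm I A > ereal ((1 + sqrt 2) / 2)" by (meson less_le_trans)
qed

end
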